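(* Let $G$ be a group acting on a set $X$, let $A,B$ be nonempty finite subsets of $G$ and $Y$ a finite subset of $X$. Then \[|AB\cdot Y|^{2}\leq|AB|\,|B\cdot Y|\,\max_{b\in B}|Ab\cdot Y|.\] In particular, when every element of $A$ commutes with every element of $B$, \[|AB\cdot Y|^{2}\leq|AB|\,|B\cdot Y|\,|A\cdot Y|.\]
   Context: $AB=\{ab\mid a\in A,b\in B\}$, $Ab=\{ab\mid a\in A\}$, and for $S\subset G$, $S\cdot Y=\{s\cdot y\mid s\in S, y\in Y\}$. *)

theory Defs
  imports "HOL-Algebra.Group_Action"
begin

definition act_set :: "('a \<Rightarrow> 'b \<Rightarrow> 'b) \<Rightarrow> 'a set \<Rightarrow> 'b set \<Rightarrow> 'b set" where
  "act_set \<phi> S Y = {\<phi> s y | s y. s \<in> S \<and> y \<in> Y}"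

end

theory Submission
  imports Defs
begin

lemma arith_step:
  fixes K0 d P Q M e f :: nat
  assumes h: "K0^2 \<le> P*Q*M" and hd1: "d \<le> e*f" and hd2: "d \<le> M"
  shows "(K0+d)^2 \<le> (P+e)*(Q+f)*M"
proof -
  have dd: "d*d \<le> M*(e*f)" using mult_le_mono[OF hd2 hd1] .
  have "(2*K0*d)^2 = 4 * K0^2 * (d*d)" by (simp add: power2_eq_square)
  also have "\<dots> \<le> 4 * (P*Q*M) * (M*(e*f))"
    using mult_le_mono[OF h dd] by simp
  also have "\<dots> = M^2 * (4*((e*Q)*(f*P)))" by (simp add: power2_eq_square algebra_simps)
  also have "\<dots> \<le> M^2 * (e*Q + f*P)^2"
  proof -
    have "int (4*((e*Q)*(f*P))) \<le> int ((e*Q + f*P)^2)"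
      using sum_squares_ge_zero[of "int (e*Q) - int (f*P)" 0]
      by (simp add: power2_eq_square algebra_simps)
    hence "4*((e*Q)*(f*P)) \<le> (e*Q + f*P)^2" by linarith
    thus ?thesis by simp
  qed
  also have "\<dots> = (M*(e*Q+f*P))^2" by (simp add: power_mult_distrib)
  finally have "2*K0*d \<le> M*(e*Q+f*P)" using power2_le_imp_le by blast
  hence "(K0+d)^2 \<le> K0^2 + M*(e*Q+f*P) + M*(e*f)"
    using dd by (simp add: power2_eq_square algebra_simps)
  also have "\<dots> \<le> P*Q*M + M*(e*Q+f*P) + M*(e*f)" using h by simp
  also have "\<dots> = (P+e)*(Q+f)*M" by (simp add: algebra_simps)
  finally show ?thesis .
qed

lemma act_set_finite:
  "finite S \<Longrightarrow> finite Y \<Longrightarrow> finite (act_set \<phi> S Y)"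
proof -
  assume "finite S" "finite Y"
  have "act_set \<phi> S Y = (\<lambda>(s,y). \<phi> s y) ` (S \<times> Y)"
    unfolding act_set_def by auto
  thus ?thesis using \<open>finite S\<close> \<open>finite Y\<close> by simp
qed

lemma act_set_Un: "act_set \<phi> (S \<union> T) Y = act_set \<phi> S Y \<union> act_set \<phi> T Y"
  unfolding act_set_def by auto

lemma key:
  fixes G (structure) and X :: "'b set" and \<phi> :: "'a \<Rightarrow> 'b \<Rightarrow> 'b"
    and A B :: "'a set" and Y :: "'b set"
  assumes grp: "group G" and act: "group_action G X \<phi>"
    and AG: "A \<subseteq> carrier G" and BG: "B \<subseteq> carrier G"
    and fA: "finite A" and fB: "finite B"
    and YX: "Y \<subseteq> X" and fY: "finite Y"
    and MB: "\<forall>b\<in>B. card (act_set \<phi> (A #> b) Y) \<le> M"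
  shows "card (act_set \<phi> (A <#> B) Y) ^ 2 \<le> card (A <#> B) * card (act_set \<phi> B Y) * M"
  using fB BG MB
proof (induction B rule: finite_induct)
  case empty
  then show ?case by (simp add: set_mult_def act_set_def)
next
  case (insert b B0)
  interpret group G by (rule grp)
  interpret ga: group_action G X \<phi> by (rule act)
  have bG: "b \<in> carrier G" using insert by auto
  have IH: "card (act_set \<phi> (A <#> B0) Y) ^ 2 \<le> card (A <#> B0) * card (act_set \<phi> B0 Y) * M"
    using insert by auto
  have AB: "A <#> insert b B0 = (A <#> B0) \<union> (A #> b)"
    unfolding set_mult_def r_coset_def by auto
  have BY: "act_set \<phi> (insert b B0) Y = act_set \<phi> B0 Y \<union> act_set \<phi> {b} Y"
    using act_set_Un[of \<phi> "{b}" B0 Y] by (simp add: Un_commute)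
  have fAB0: "finite (A <#> B0)" unfolding set_mult_def using fA insert(1) by auto
  have fAb: "finite (A #> b)" unfolding r_coset_def using fA by auto
  define U where "U = act_set \<phi> (A <#> B0) Y"
  define V where "V = act_set \<phi> (A #> b) Y"
  define E where "E = (A #> b) - (A <#> B0)"
  define F where "F = act_set \<phi> {b} Y - act_set \<phi> B0 Y"
  define D where "D = V - U"
  have fU: "finite U" unfolding U_def using act_set_finite fAB0 fY by blast
  have fV: "finite V" unfolding V_def using act_set_finite fAb fY by blast
  have fE: "finite E" unfolding E_def using fAb by auto
  have fF: "finite F" unfolding F_def using act_set_finite[of "{b}" Y \<phi>] fY by auto
  have cardK: "card (act_set \<phi> (A <#> insert b B0) Y) = card U + card D"
    unfolding AB act_set_Un U_def[symmetric] V_def[symmetric] D_def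
    using fU fV by (metis Un_Diff_cancel card_Un_disjoint Diff_disjoint finite_Diff)
  have cardAB: "card (A <#> insert b B0) = card (A <#> B0) + card E"
    unfolding AB E_def using fAB0 fAb
    by (metis Un_Diff_cancel card_Un_disjoint Diff_disjoint finite_Diff)
  have fB0Y: "finite (act_set \<phi> B0 Y)" using act_set_finite insert(1) fY by blast
  have fbY: "finite (act_set \<phi> {b} Y)" using act_set_finite[of "{b}" Y \<phi>] fY by auto
  have cardBY: "card (act_set \<phi> (insert b B0) Y) = card (act_set \<phi> B0 Y) + card F"
    unfolding BY F_def using fB0Y fbY
    by (metis Un_Diff_cancel card_Un_disjoint Diff_disjoint finite_Diff)
  have d1: "card D \<le> M"
  proof -
    have "card D \<le> card V" unfolding D_def using fV by (simp add: card_mono)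
    also have "\<dots> \<le> M" unfolding V_def using insert by auto
    finally show ?thesis .
  qed
  have sub: "D \<subseteq> (\<lambda>(c,w). \<phi> c (\<phi> (inv b) w)) ` (E \<times> F)"
  proof
    fix z assume zD: "z \<in> D"
    then obtain c y where cy: "c \<in> A #> b" "y \<in> Y" "z = \<phi> c y"
      unfolding D_def V_def act_set_def by auto
    then obtain a where a: "a \<in> A" "c = a \<otimes> b" unfolding r_coset_def by auto
    have aG: "a \<in> carrier G" using a AG by auto
    have yX: "y \<in> X" using cy YX by auto
    have zU: "z \<notin> U" using zD D_def by auto
    have cE: "c \<in> E"
    proof -
      have "c \<notin> A <#> B0" using zU cy unfolding U_def act_set_def by auto
      thus ?thesis using cy E_def by auto
    qed
    define w where "w = \<phi> b y"
    have wF: "w \<in> F"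
    proof -
      have "w \<in> act_set \<phi> {b} Y" unfolding w_def act_set_def using cy by auto
      moreover have "w \<notin> act_set \<phi> B0 Y"
      proof
        assume "w \<in> act_set \<phi> B0 Y"
        then obtain b0 y' where b0: "b0 \<in> B0" "y' \<in> Y" "w = \<phi> b0 y'"
          unfolding act_set_def by auto
        have b0G: "b0 \<in> carrier G" using b0 insert by auto
        have "z = \<phi> a (\<phi> b y)" using cy a ga.composition_rule[OF yX aG bG] by simp
        also have "\<dots> = \<phi> a (\<phi> b0 y')" using b0 w_def by simp
        also have "\<dots> = \<phi> (a \<otimes> b0) y'"
          using ga.composition_rule[of y' a b0] b0 YX aG b0G by auto
        finally have "z \<in> U" unfolding U_def act_set_def set_mult_def
          using a b0 by blast
        thus False using zU by simp
      qed
      ultimately show ?thesis unfolding F_def by simp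
    qed
    have "\<phi> (inv b) w = y"
    proof -
      have "\<phi> (inv b) w = \<phi> (inv b \<otimes> b) y"
        unfolding w_def using ga.composition_rule[OF yX inv_closed[OF bG] bG] by simp
      also have "\<dots> = \<phi> \<one> y" using bG by simp
      also have "\<dots> = y" using ga.id_eq_one[symmetric] yX by (metis restrict_apply')
      finally show ?thesis .
    qed
    hence "z = (\<lambda>(c,w). \<phi> c (\<phi> (inv b) w)) (c, w)" using cy by simp
    thus "z \<in> (\<lambda>(c,w). \<phi> c (\<phi> (inv b) w)) ` (E \<times> F)" using cE wF by blast
  qed
  have d2: "card D \<le> card E * card F"
  proof -
    have "card D \<le> card ((\<lambda>(c,w). \<phi> c (\<phi> (inv b) w)) ` (E \<times> F))"
      using sub fE fF by (intro card_mono) auto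
    also have "\<dots> \<le> card (E \<times> F)" by (rule card_image_le) (use fE fF in auto)
    also have "\<dots> = card E * card F" by (simp add: card_cartesian_product)
    finally show ?thesis .
  qed
  have "(card U + card D)^2 \<le> (card (A <#> B0) + card E) * (card (act_set \<phi> B0 Y) + card F) * M"
    using arith_step[OF IH[folded U_def] d2 d1] .
  thus ?case using cardK cardAB cardBY by simp
qed

theorem mainTheorem4:
  fixes G (structure) and X :: "'b set" and \<phi> :: "'a \<Rightarrow> 'b \<Rightarrow> 'b"
    and A B :: "'a set" and Y :: "'b set"
  assumes "group G" and "group_action G X \<phi>"
    and "A \<subseteq> carrier G" and "B \<subseteq> carrier G"
    and "finite A" and "finite B" and "A \<noteq> {}" and "B \<noteq> {}"
    and "Y \<subseteq> X" and "finite Y"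
  shows "card (act_set \<phi> (A <#> B) Y) ^ 2
           \<le> card (A <#> B) * card (act_set \<phi> B Y)
             * Max ((\<lambda>b. card (act_set \<phi> (A #> b) Y)) ` B)
         \<and> ((\<forall>a\<in>A. \<forall>b\<in>B. a \<otimes> b = b \<otimes> a) \<longrightarrow>
         card (act_set \<phi> (A <#> B) Y) ^ 2
           \<le> card (A <#> B) * card (act_set \<phi> B Y) * card (act_set \<phi> A Y))"
proof
  show "card (act_set \<phi> (A <#> B) Y) ^ 2
           \<le> card (A <#> B) * card (act_set \<phi> B Y)
             * Max ((\<lambda>b. card (act_set \<phi> (A #> b) Y)) ` B)"
    by (rule key[OF assms(1,2,3,4,5,6,9,10)]) (use assms(6) in auto)
next
  show "(\<forall>a\<in>A. \<forall>b\<in>B. a \<otimes> b = b \<otimes> a) \<longrightarrow>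
         card (act_set \<phi> (A <#> B) Y) ^ 2
           \<le> card (A <#> B) * card (act_set \<phi> B Y) * card (act_set \<phi> A Y)"
  proof
    assume comm: "\<forall>a\<in>A. \<forall>b\<in>B. a \<otimes> b = b \<otimes> a"
    interpret ga: group_action G X \<phi> by (rule assms(2))
    have "\<forall>b\<in>B. card (act_set \<phi> (A #> b) Y) \<le> card (act_set \<phi> A Y)"
    proof
      fix b assume bB: "b \<in> B"
      have bG: "b \<in> carrier G" using bB assms(4) by auto
      have eq: "act_set \<phi> (A #> b) Y = \<phi> b ` act_set \<phi> A Y"
      proof
        show "act_set \<phi> (A #> b) Y \<subseteq> \<phi> b ` act_set \<phi> A Y"
        proof
          fix z assume "z \<in> act_set \<phi> (A #> b) Y"
          then obtain a y where ay: "a \<in> A" "y \<in> Y" "z = \<phi> (a \<otimes> b) y"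
            unfolding act_set_def r_coset_def by auto
          have "z = \<phi> (b \<otimes> a) y" using ay comm bB by metis
          also have "\<dots> = \<phi> b (\<phi> a y)"
            using ga.composition_rule[of y b a] ay assms(3,9) bG by auto
          finally show "z \<in> \<phi> b ` act_set \<phi> A Y" unfolding act_set_def using ay by blast
        qed
      next
        show "\<phi> b ` act_set \<phi> A Y \<subseteq> act_set \<phi> (A #> b) Y"
        proof
          fix z assume "z \<in> \<phi> b ` act_set \<phi> A Y"
          then obtain a y where ay: "a \<in> A" "y \<in> Y" "z = \<phi> b (\<phi> a y)"
            unfolding act_set_def by auto
          have "z = \<phi> (b \<otimes> a) y"
            using ga.composition_rule[of y b a] ay assms(3,9) bG by (metis subsetD)
          also have "\<dots> = \<phi> (a \<otimes> b) y" using ay comm bB by metis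
          finally show "z \<in> act_set \<phi> (A #> b) Y"
            unfolding act_set_def r_coset_def using ay by blast
        qed
      qed
      have sX: "act_set \<phi> A Y \<subseteq> X"
        unfolding act_set_def using ga.element_image assms(3,9) by blast
      have "inj_on (\<phi> b) (act_set \<phi> A Y)"
        using ga.inj_prop[OF bG] sX inj_on_subset by blast
      hence "card (act_set \<phi> (A #> b) Y) = card (act_set \<phi> A Y)"
        unfolding eq by (rule card_image)
      thus "card (act_set \<phi> (A #> b) Y) \<le> card (act_set \<phi> A Y)" by simp
    qed
    thus "card (act_set \<phi> (A <#> B) Y) ^ 2
           \<le> card (A <#> B) * card (act_set \<phi> B Y) * card (act_set \<phi> A Y)"
      by (rule key[OF assms(1,2,3,4,5,6,9,10)])
  qed
qed

end
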